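(* Let $m_0,\widetilde m_0,\widetilde m_1,\dots,\widetilde m_6$ be complex-valued functions on $\mathbb R^2$, $2\pi$-periodic in each variable. Suppose that for every $\boldsymbol\omega\in S_0$ the matrix $\widetilde{\mathbf M}[:,\widehat0](\boldsymbol\omega)$ has full rank $6$ and $\sum_{i\in\{0,2,4,6\}}m_0(\boldsymbol\omega)\overline{\widetilde m_0(\boldsymbol\omega+\boldsymbol\pi_i)}=1$. Then the vector $\mathbf b_0'(\boldsymbol\omega)$ lies in the column space of $\widetilde{\mathbf M}[:,\widehat0](\boldsymbol\omega)$ for every $\boldsymbol\omega\in S_0$ if and only if, for every $\boldsymbol\omega\in S_0$, $\operatorname{rank}\widetilde{\mathbf M}[\mathrm{odd},\widehat0](\boldsymbol\omega)=\operatorname{rank}\widetilde{\mathbf M}[\mathrm{even},\widehat0](\boldsymbol\omega)=3$ and $[m_0(\boldsymbol\omega),m_0(\boldsymbol\omega+\boldsymbol\pi_2),m_0(\boldsymbol\omega+\boldsymbol\pi_4),m_0(\boldsymbol\omega+\boldsymbol\pi_6)]\,\widetilde{\mathbf M}[\mathrm{even},\widehat0](\boldsymbol\omega)=\mathbf 0$, $[m_0(\boldsymbol\omega+\boldsymbol\pi_1),m_0(\boldsymbol\omega+\boldsymbol\pi_3),m_0(\boldsymbol\omega+\boldsymbol\pi_5),m_0(\boldsymbol\omega+\boldsymbol\pi_7)]\,\widetilde{\mathbf M}[\mathrm{odd},\widehat0](\boldsymbol\omega)=\mathbf 0$.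
   Context: $S_0=[-\pi,\pi)^2$. Shifts: $\boldsymbol\pi_0=(0,0)$, $\boldsymbol\pi_1=(\pi/2,\pi/2)$, $\boldsymbol\pi_2=(\pi,0)$, $\boldsymbol\pi_3=(-\pi/2,\pi/2)$, $\boldsymbol\pi_4=(0,\pi)$, $\boldsymbol\pi_5=(\pi/2,-\pi/2)$, $\boldsymbol\pi_6=(\pi,\pi)$, $\boldsymbol\pi_7=(-\pi/2,-\pi/2)$. $\widetilde{\mathbf M}(\boldsymbol\omega)\in\mathbb C^{8\times7}$ has rows $i=0,\dots,7$, columns $j=0,\dots,6$, $(i,j)$ entry $\overline{\widetilde m_j(\boldsymbol\omega+\boldsymbol\pi_i)}$, except that entries with $j=0$ and $i$ odd are $0$. $\widetilde{\mathbf M}[:,0](\boldsymbol\omega)$ is its column of index $0$; $\widetilde{\mathbf M}[:,\widehat0](\boldsymbol\omega)\in\mathbb C^{8\times6}$ is obtained by deleting that column; $\widetilde{\mathbf M}[\mathrm{even},\widehat0](\boldsymbol\omega)$ and $\widetilde{\mathbf M}[\mathrm{odd},\widehat0](\boldsymbol\omega)\in\mathbb C^{4\times6}$ consist of the rows of $\widetilde{\mathbf M}[:,\widehat0](\boldsymbol\omega)$ with indices $0,2,4,6$ and $1,3,5,7$ respectively (in this order). $\mathbf b_0=(1,0,\dots,0)^\top\in\mathbb R^8$ and $\mathbf b_0'(\boldsymbol\omega)=\mathbf b_0-m_0(\boldsymbol\omega)\,\widetilde{\mathbf M}[:,0](\boldsymbol\omega)$. *)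

theory Defs
  imports "HOL-Analysis.Analysis"
begin

text \<open>Index of an element of a numeral type 'a bit0 (e.g. 8, 6, 4) as a natural number in 0..<CARD.\<close>
definition ix :: "'a::finite bit0 \<Rightarrow> nat" where
  "ix i = nat (Rep_bit0 i)"

text \<open>The domain S_0 = [-pi,pi)^2.\<close>
definition S0 :: "(real \<times> real) set" where
  "S0 = {-pi..<pi} \<times> {-pi..<pi}"

text \<open>The shifts pi_0, ..., pi_7.\<close>
definition shift :: "nat \<Rightarrow> real \<times> real" where
  "shift i = [(0,0), (pi/2,pi/2), (pi,0), (-pi/2,pi/2), (0,pi), (pi/2,-pi/2), (pi,pi), (-pi/2,-pi/2)] ! i"

text \<open>2pi-periodicity in each variable.\<close>
definition periodic2 :: "(real \<times> real \<Rightarrow> complex) \<Rightarrow> bool" where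
  "periodic2 f \<longleftrightarrow> (\<forall>x y. f (x + 2*pi, y) = f (x, y) \<and> f (x, y + 2*pi) = f (x, y))"

text \<open>Entries of the 8x7 matrix M~(omega); mt j is the function m~_j.\<close>
definition Mt_entry :: "(nat \<Rightarrow> real \<times> real \<Rightarrow> complex) \<Rightarrow> real \<times> real \<Rightarrow> nat \<Rightarrow> nat \<Rightarrow> complex" where
  "Mt_entry mt w i j = (if j = 0 \<and> odd i then 0 else cnj (mt j (w + shift i)))"

text \<open>M~[:, hat 0](omega): delete column 0 (8x6).\<close>
definition Mhat :: "(nat \<Rightarrow> real \<times> real \<Rightarrow> complex) \<Rightarrow> real \<times> real \<Rightarrow> complex^6^8" where
  "Mhat mt w = (\<chi> i j. Mt_entry mt w (ix i) (ix j + 1))"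

text \<open>Rows 0,2,4,6 of M~[:, hat 0](omega).\<close>
definition Meven :: "(nat \<Rightarrow> real \<times> real \<Rightarrow> complex) \<Rightarrow> real \<times> real \<Rightarrow> complex^6^4" where
  "Meven mt w = (\<chi> i j. Mt_entry mt w (2 * ix i) (ix j + 1))"

text \<open>Rows 1,3,5,7 of M~[:, hat 0](omega).\<close>
definition Modd :: "(nat \<Rightarrow> real \<times> real \<Rightarrow> complex) \<Rightarrow> real \<times> real \<Rightarrow> complex^6^4" where
  "Modd mt w = (\<chi> i j. Mt_entry mt w (2 * ix i + 1) (ix j + 1))"

text \<open>b_0'(omega) = b_0 - m_0(omega) M~[:,0](omega).\<close>
definition b0' :: "(real \<times> real \<Rightarrow> complex) \<Rightarrow> (nat \<Rightarrow> real \<times> real \<Rightarrow> complex) \<Rightarrow> real \<times> real \<Rightarrow> complex^8" where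
  "b0' m0 mt w = (\<chi> i. (if ix i = 0 then 1 else 0) - m0 w * Mt_entry mt w (ix i) 0)"

end

theory Submission
  imports Defs
begin
lemma less8: "(i::nat) < 8 \<longleftrightarrow> i = 0 \<or> i = 1 \<or> i = 2 \<or> i = 3 \<or> i = 4 \<or> i = 5 \<or> i = 6 \<or> i = 7"
  by auto


definition sop :: "nat \<Rightarrow> nat \<Rightarrow> nat" where
  "sop i k = [[0, 1, 2, 3, 4, 5, 6, 7], [1, 6, 3, 4, 5, 2, 7, 0], [2, 3, 0, 1, 6, 7, 4, 5], [3, 4, 1, 6, 7, 0, 5, 2], [4, 5, 6, 7, 0, 1, 2, 3], [5, 2, 7, 0, 1, 6, 3, 4], [6, 7, 4, 5, 2, 3, 0, 1], [7, 0, 5, 2, 3, 4, 1, 6]] ! i ! k"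
definition cxa :: "nat \<Rightarrow> nat \<Rightarrow> int" where
  "cxa i k = [[0, 0, 0, 0, 0, 0, 0, 0], [0, 0, 1, 0, 0, 0, 1, 0], [0, 1, 1, 0, 0, 1, 1, 0], [0, 0, 0, -1, 0, 0, 0, -1], [0, 0, 0, 0, 0, 0, 0, 0], [0, 0, 1, 0, 0, 0, 1, 0], [0, 1, 1, 0, 0, 1, 1, 0], [0, 0, 0, -1, 0, 0, 0, -1]] ! i ! k"
definition cxb :: "nat \<Rightarrow> nat \<Rightarrow> int" where
  "cxb i k = [[0, 0, 0, 0, 0, 0, 0, 0], [0, 0, 0, 0, 1, 0, 1, 0], [0, 0, 0, 0, 0, 0, 0, 0], [0, 0, 0, 0, 1, 0, 1, 0], [0, 1, 0, 1, 1, 0, 1, 0], [0, 0, 0, 0, 0, -1, 0, -1], [0, 1, 0, 1, 1, 0, 1, 0], [0, 0, 0, 0, 0, -1, 0, -1]] ! i ! k"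
definition sinv :: "nat \<Rightarrow> nat \<Rightarrow> nat" where
  "sinv k j = [[0, 1, 2, 3, 4, 5, 6, 7], [7, 0, 5, 2, 3, 4, 1, 6], [2, 3, 0, 1, 6, 7, 4, 5], [5, 2, 7, 0, 1, 6, 3, 4], [4, 5, 6, 7, 0, 1, 2, 3], [3, 4, 1, 6, 7, 0, 5, 2], [6, 7, 4, 5, 2, 3, 0, 1], [1, 6, 3, 4, 5, 2, 7, 0]] ! k ! j"


lemma shift_add:
  assumes "i < 8" "k < 8"
  shows "shift i + shift k = shift (sop i k) + (2*pi * of_int (cxa i k), 2*pi * of_int (cxb i k))"
  using assms
  apply (simp add: less8)
  apply (elim disjE; simp add: shift_def sop_def cxa_def cxb_def field_simps)
  done

lemma sinv_props:
  assumes "k < 8" "j < 8"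
  shows "sinv k j < 8 \<and> sop k (sinv k j) = j \<and> (sinv k j = 0 \<longleftrightarrow> j = k) \<and> (odd (sinv k j) \<longleftrightarrow> (odd j \<noteq> odd k))"
  using assms
  apply (simp add: less8)
  apply (elim disjE; simp add: sinv_def sop_def)
  done

lemma per_int:
  assumes "periodic2 f"
  shows "f (x + 2*pi * of_int a, y + 2*pi * of_int b) = f (x, y)"
proof -
  have A: "f (x + 2*pi * of_int a, y) = f (x, y)" for x y
  proof (induction a arbitrary: x rule: int_induct[where k=0])
    case base then show ?case by simp
  next
    case (step1 i) 
    have "f (x + 2*pi * of_int (i+1), y) = f ((x + 2*pi * of_int i) + 2*pi, y)" by (simp add: algebra_simps)
    also have "\<dots> = f (x + 2*pi * of_int i, y)" using assms unfolding periodic2_def by blast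
    finally show ?case using step1 by simp
  next
    case (step2 i)
    have "f (x + 2*pi * of_int i, y) = f ((x + 2*pi * of_int (i - 1)) + 2*pi, y)" by (simp add: algebra_simps)
    also have "\<dots> = f (x + 2*pi * of_int (i - 1), y)" using assms unfolding periodic2_def by blast
    finally show ?case using step2 by simp
  qed
  have B: "f (x, y + 2*pi * of_int b) = f (x, y)" for x y
  proof (induction b arbitrary: y rule: int_induct[where k=0])
    case base then show ?case by simp
  next
    case (step1 i) 
    have "f (x, y + 2*pi * of_int (i+1)) = f (x, (y + 2*pi * of_int i) + 2*pi)" by (simp add: algebra_simps)
    also have "\<dots> = f (x, y + 2*pi * of_int i)" using assms unfolding periodic2_def by blast
    finally show ?case using step1 by simp
  next
    case (step2 i)
    have "f (x, y + 2*pi * of_int i) = f (x, (y + 2*pi * of_int (i - 1)) + 2*pi)" by (simp add: algebra_simps)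
    also have "\<dots> = f (x, y + 2*pi * of_int (i - 1))" using assms unfolding periodic2_def by blast
    finally show ?case using step2 by simp
  qed
  show ?thesis using A B by simp
qed

lemma per_shift:
  assumes "periodic2 f" "i < 8" "k < 8"
  shows "f (w + shift i + shift k) = f (w + shift (sop i k))"
proof -
  obtain p1 p2 where pp: "w + shift (sop i k) = (p1, p2)" by fastforce
  have "w + shift i + shift k = (p1 + 2*pi * of_int (cxa i k), p2 + 2*pi * of_int (cxb i k))"
    using shift_add[OF assms(2,3)] pp by (simp add: algebra_simps prod_eq_iff)
  then show ?thesis using per_int[OF assms(1)] pp by simp
qed

lemma red_S0: "\<exists>a b::int. (fst w + 2*pi * of_int a, snd w + 2*pi * of_int b) \<in> S0"
proof -
  have r: "\<exists>a::int. -pi \<le> x + 2*pi * of_int a \<and> x + 2*pi * of_int a < pi" for x :: real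
  proof -
    define a where "a = - \<lfloor>(x + pi) / (2*pi)\<rfloor>"
    have f1: "of_int \<lfloor>(x + pi) / (2*pi)\<rfloor> \<le> (x + pi) / (2*pi)" by (rule of_int_floor_le)
    have f2: "(x + pi) / (2*pi) < of_int \<lfloor>(x + pi) / (2*pi)\<rfloor> + 1" by (rule real_of_int_floor_add_one_gt)
    have p: "pi > 0" by (rule pi_gt_zero)
    have p2: "2*pi > 0" using p by simp
    from f1 have g1: "of_int \<lfloor>(x + pi) / (2*pi)\<rfloor> * (2*pi) \<le> x + pi" using pos_le_divide_eq[OF p2] by blast
    from f2 have g2: "x + pi < (of_int \<lfloor>(x + pi) / (2*pi)\<rfloor> + 1) * (2*pi)" using pos_divide_less_eq[OF p2] by blast
    show ?thesis by (rule exI[of _ a]) (use g1 g2 in \<open>simp add: a_def algebra_simps\<close>)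
  qed
  obtain a where "-pi \<le> fst w + 2*pi * of_int a \<and> fst w + 2*pi * of_int a < pi" using r by blast
  moreover obtain b where "-pi \<le> snd w + 2*pi * of_int b \<and> snd w + 2*pi * of_int b < pi" using r by blast
  ultimately show ?thesis by (auto simp: S0_def)
qed



definition tob :: "nat \<Rightarrow> 'a::finite bit0" where "tob n = Abs_bit0 (int n)"

lemma ix_lt: "ix (i::'a::finite bit0) < CARD('a bit0)"
proof -
  have "Rep_bit0 i \<in> {0..<2 * int CARD('a)}" by (rule Rep_bit0)
  then show ?thesis by (simp add: ix_def card_bit0 nat_less_iff)
qed

lemma ix_lt2: "ix (i::'a::finite bit0) < 2 * CARD('a)"
  using ix_lt[of i] by simp

lemma ix_tob: "n < CARD('a::finite bit0) \<Longrightarrow> ix (tob n :: 'a bit0) = n"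
  by (simp add: ix_def tob_def card_bit0 Abs_bit0_inverse)

lemma tob_ix: "tob (ix (i::'a::finite bit0)) = i"
proof -
  have "Rep_bit0 i \<in> {0..<2 * int CARD('a)}" by (rule Rep_bit0)
  then show ?thesis by (simp add: ix_def tob_def Rep_bit0_inverse)
qed

lemma sum_bit0: "sum f (UNIV :: 'a::finite bit0 set) = (\<Sum>n<CARD('a bit0). f (tob n))"
  by (rule sum.reindex_bij_witness[where i=tob and j=ix]) (auto simp: ix_lt2 ix_tob tob_ix)

definition dotc :: "'a::field^'n \<Rightarrow> 'a^'n \<Rightarrow> 'a" where
  "dotc r x = sum (\<lambda>j. r$j * x$j) UNIV"

lemma dotc_add[simp]: "dotc (a + b) x = dotc a x + dotc b x"
  by (simp add: dotc_def sum.distrib ring_distribs)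
lemma dotc_neg[simp]: "dotc (- a) x = - dotc a x"
  by (simp add: dotc_def sum_negf)
lemma dotc_diff[simp]: "dotc (a - b) x = dotc a x - dotc b x"
  by (simp add: dotc_def sum_subtractf ring_distribs)
lemma dotc_scale[simp]: "dotc (c *s a) x = c * dotc a x"
  by (simp add: dotc_def sum_distrib_left mult.assoc)
lemma dotc_zero[simp]: "dotc 0 x = 0"
  by (simp add: dotc_def)
lemma dotc_axis: "dotc v (axis j 1) = v $ j"
  by (simp add: dotc_def axis_def if_distrib cong: if_cong)
lemma dotc_comm: "dotc a b = dotc b a"
  by (simp add: dotc_def mult.commute)
lemma dotc_axis2: "dotc (axis j 1) v = v $ j"
  by (simp add: dotc_comm dotc_axis)
lemma mv_dotc: "(A *v x) $ i = dotc (A $ i) x"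
  by (simp add: matrix_vector_mult_def dotc_def)

lemma dotc_span: "v \<in> vec.span S \<Longrightarrow> (\<And>s. s \<in> S \<Longrightarrow> dotc s x = 0) \<Longrightarrow> dotc v x = 0"
  by (induction rule: vec.span_induct_alt) auto

lemma vec_zero_by_dotc: "(\<And>x. dotc v x = (0::'a::field)) \<Longrightarrow> v = 0"
  by (metis dotc_axis vec_eq_iff zero_index)

lemma ker_zero:
  assumes sp: "vec.span (R ` {0..<8::nat}) = (UNIV :: ('a::field^'n) set)"
    and z: "\<And>i. i < 8 \<Longrightarrow> dotc (R i) x = 0"
  shows "x = 0"
proof -
  have zz: "\<And>s. s \<in> R ` {0..<8} \<Longrightarrow> dotc s x = 0" using z by auto
  have "dotc v x = 0" for v
    using dotc_span[of v "R ` {0..<8}" x, OF _ zz] sp by auto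
  then show ?thesis by (metis dotc_axis2 vec_eq_iff zero_index)
qed

lemma inj_surj_sq: "inj ((*v) (F::'a::field^'n^'n)) \<longleftrightarrow> surj ((*v) F)"
  by (metis matrix_left_invertible_injective matrix_left_right_inverse matrix_right_invertible_surjective)

definition sig :: "nat \<Rightarrow> nat" where "sig n = [0,2,4,1,3,5] ! n"

definition FF :: "(nat \<Rightarrow> 'a::field^6) \<Rightarrow> 'a^6^6" where
  "FF R = (\<chi> k. R (sig (ix k)))"

lemma FF_app: "n < 6 \<Longrightarrow> (FF R *v x) $ (tob n) = dotc (R (sig n)) x"
  by (simp add: FF_def mv_dotc ix_tob)

lemma less6: "(i::nat) < 6 \<longleftrightarrow> i = 0 \<or> i = 1 \<or> i = 2 \<or> i = 3 \<or> i = 4 \<or> i = 5"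
  by auto
lemma solve_c:
  fixes R :: "nat \<Rightarrow> 'a::field^6"
  assumes sp: "vec.span (R ` {0..<8}) = UNIV"
    and TH: "R 0 + R 2 + R 4 + R 6 = 0" and TO: "R 1 + R 3 + R 5 + R 7 = 0"
    and bH: "b 0 + b 2 + b 4 + b 6 = 0" and bO: "b 1 + b 3 + b 5 + b 7 = 0"
  shows "\<exists>x. \<forall>i<8. dotc (R i) x = b i"
proof -
  have R6: "R 6 = - (R 0 + R 2 + R 4)" by (rule sym[OF minus_unique[OF TH]])
  have R7: "R 7 = - (R 1 + R 3 + R 5)" by (rule sym[OF minus_unique[OF TO]])
  have b6: "b 6 = - (b 0 + b 2 + b 4)" by (rule sym[OF minus_unique[OF bH]])
  have b7: "b 7 = - (b 1 + b 3 + b 5)" by (rule sym[OF minus_unique[OF bO]])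
  have "inj ((*v) (FF R))"
  proof (rule injI)
    fix x y assume "FF R *v x = FF R *v y"
    then have e: "FF R *v (x - y) = 0" by (simp add: matrix_vector_mult_diff_distrib)
    have d: "dotc (R (sig n)) (x - y) = 0" if "n < 6" for n
      using FF_app[OF that, of R "x - y"] e by simp
    have "dotc (R i) (x - y) = 0" if "i < 8" for i
    proof -
      have 0: "dotc (R 0) (x-y) = 0" using d[of 0] by (simp add: sig_def)
      have 2: "dotc (R 2) (x-y) = 0" using d[of 1] by (simp add: sig_def)
      have 4: "dotc (R 4) (x-y) = 0" using d[of 2] by (simp add: sig_def)
      have 1: "dotc (R 1) (x-y) = 0" using d[of 3] by (simp add: sig_def)
      have 3: "dotc (R 3) (x-y) = 0" using d[of 4] by (simp add: sig_def)
      have 5: "dotc (R 5) (x-y) = 0" using d[of 5] by (simp add: sig_def)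
      show ?thesis using that 0 1 2 3 4 5 unfolding less8 by (auto simp: R6 R7)
    qed
    then have "x - y = 0" using ker_zero[OF sp] by blast
    then show "x = y" by simp
  qed
  then have "surj ((*v) (FF R))" using inj_surj_sq by blast
  then obtain x where x: "FF R *v x = (\<chi> k. b (sig (ix k)))" by (metis surjD)
  have d: "dotc (R (sig n)) x = b (sig n)" if "n < 6" for n
    using FF_app[OF that, of R x] x by (simp add: ix_tob that)
  have "dotc (R i) x = b i" if "i < 8" for i
  proof -
    have 0: "dotc (R 0) x = b 0" using d[of 0] by (simp add: sig_def)
    have 2: "dotc (R 2) x = b 2" using d[of 1] by (simp add: sig_def)
    have 4: "dotc (R 4) x = b 4" using d[of 2] by (simp add: sig_def)
    have 1: "dotc (R 1) x = b 1" using d[of 3] by (simp add: sig_def)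
    have 3: "dotc (R 3) x = b 3" using d[of 4] by (simp add: sig_def)
    have 5: "dotc (R 5) x = b 5" using d[of 5] by (simp add: sig_def)
    show ?thesis using that 0 1 2 3 4 5 unfolding less8 by (auto simp: R6 R7 b6 b7)
  qed
  then show ?thesis by blast
qed

lemma solve_d:
  fixes R :: "nat \<Rightarrow> 'a::field^6"
  assumes H: "\<And>b. b 0 + b 2 + b 4 + b 6 = 0 \<Longrightarrow> b 1 + b 3 + b 5 + b 7 = 0 \<Longrightarrow> \<exists>x. \<forall>i<8. dotc (R i) x = b i"
  shows "R 0 + R 2 + R 4 + R 6 = 0 \<and> R 1 + R 3 + R 5 + R 7 = 0"
proof -
  define bb :: "'a^6 \<Rightarrow> nat \<Rightarrow> 'a" where "bb t n = (if n = 0 then t$tob 0 else if n = 2 then t$tob 1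
     else if n = 4 then t$tob 2 else if n = 1 then t$tob 3 else if n = 3 then t$tob 4 else if n = 5 then t$tob 5
     else if n = 6 then - (t$tob 0 + t$tob 1 + t$tob 2) else if n = 7 then - (t$tob 3 + t$tob 4 + t$tob 5) else 0)" for t n
  have pre: "\<exists>x. (\<forall>i<8. dotc (R i) x = bb t i) \<and> FF R *v x = t" for t
  proof -
    have ex: "\<exists>x. \<forall>i<8. dotc (R i) x = bb t i" by (rule H) (simp_all add: bb_def)
    then obtain x where x: "\<forall>i<8. dotc (R i) x = bb t i" by blast
    have "(FF R *v x) $ k = t $ k" for k
    proof -
      have "ix k < 6" using ix_lt[of k] by simp
      then have "(FF R *v x) $ tob (ix k) = t $ tob (ix k)"
        using x unfolding FF_app[OF \<open>ix k < 6\<close>] unfolding less6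
        by (auto simp: sig_def bb_def)
      then show ?thesis by (simp add: tob_ix)
    qed
    then show ?thesis using x by (auto simp: vec_eq_iff)
  qed
  then have "surj ((*v) (FF R))" by (metis surjI)
  then have inj: "inj ((*v) (FF R))" using inj_surj_sq by blast
  have all: "\<forall>i<8. dotc (R i) x = bb (FF R *v x) i" for x
  proof -
    obtain x' where x': "\<forall>i<8. dotc (R i) x' = bb (FF R *v x) i" "FF R *v x' = FF R *v x"
      using pre by blast
    then have "x' = x" using inj by (simp add: inj_eq)
    then show ?thesis using x' by simp
  qed
  have "dotc (R 0 + R 2 + R 4 + R 6) x = 0" for x using all[of x] by (simp add: bb_def)
  moreover have "dotc (R 1 + R 3 + R 5 + R 7) x = 0" for x using all[of x] by (simp add: bb_def)
  ultimately show ?thesis using vec_zero_by_dotc by blast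
qed

lemma card3: "card {a, b, c} \<le> 3"
  by (simp add: card_insert_if)

lemma dim_half:
  fixes R :: "nat \<Rightarrow> 'a::field^'n"
  assumes T: "R a + R b + R c + R d = 0"
  shows "vec.dim {R a, R b, R c, R d} \<le> 3" "R ` {a,b,c,d} \<subseteq> vec.span {R a, R b, R c}"
proof -
  have Rd: "R d = - (R a + R b + R c)" by (rule sym[OF minus_unique[OF T]])
  have "R d \<in> vec.span {R a, R b, R c}"
  proof -
    have "R a \<in> vec.span {R a, R b, R c}" "R b \<in> vec.span {R a, R b, R c}" "R c \<in> vec.span {R a, R b, R c}"
      by (simp_all add: vec.span_base)
    then show ?thesis unfolding Rd by (intro vec.span_neg vec.span_add) assumption+
  qed
  then show "R ` {a,b,c,d} \<subseteq> vec.span {R a, R b, R c}"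
    using \<open>R d \<in> vec.span {R a, R b, R c}\<close> by (simp add: vec.span_base)
  then have "vec.dim {R a, R b, R c, R d} \<le> card {R a, R b, R c}"
    using vec.dim_le_card[of "{R a, R b, R c, R d}" "{R a, R b, R c}"] by simp
  then show "vec.dim {R a, R b, R c, R d} \<le> 3" by (rule le_trans[OF _ card3])
qed

lemma rank_a:
  fixes R :: "nat \<Rightarrow> 'a::field^'n"
  assumes d6: "vec.dim (R ` {0..<8}) = 6"
    and TH: "R 0 + R 2 + R 4 + R 6 = 0" and TO: "R 1 + R 3 + R 5 + R 7 = 0"
  shows "vec.dim (R ` {0,2,4,6}) = 3 \<and> vec.dim (R ` {1,3,5,7}) = 3"
proof -
  have "{0..<8::nat} = {0,2,4,6} \<union> {1,3,5,7}"
    by (simp add: numeral_eq_Suc atLeastLessThanSuc insert_commute)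
  then have u: "R ` {0..<8} = R ` {0,2,4,6} \<union> R ` {1,3,5,7}" by (simp only: image_Un)
  note h1 = dim_half[OF TH] and h2 = dim_half[OF TO]
  obtain B1 where B1: "B1 \<subseteq> R ` {0,2,4,6}" "vec.independent B1" "R ` {0,2,4,6} \<subseteq> vec.span B1" "card B1 = vec.dim (R ` {0,2,4,6})"
    using vec.basis_exists by blast
  obtain B2 where B2: "B2 \<subseteq> R ` {1,3,5,7}" "vec.independent B2" "R ` {1,3,5,7} \<subseteq> vec.span B2" "card B2 = vec.dim (R ` {1,3,5,7})"
    using vec.basis_exists by blast
  have f: "finite B1" "finite B2" using B1(2) B2(2) vec.finiteI_independent by auto
  have "R ` {0..<8} \<subseteq> vec.span (B1 \<union> B2)"
    unfolding u using B1(3) B2(3) vec.span_mono[of B1 "B1 \<union> B2"] vec.span_mono[of B2 "B1 \<union> B2"] by blast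
  then have "6 \<le> card (B1 \<union> B2)" using vec.dim_le_card[of "R ` {0..<8}" "B1 \<union> B2"] f d6 by auto
  also have "\<dots> \<le> card B1 + card B2" by (rule card_Un_le)
  finally have "6 \<le> vec.dim (R ` {0,2,4,6}) + vec.dim (R ` {1,3,5,7})" using B1(4) B2(4) by simp
  moreover have "vec.dim (R ` {0,2,4,6}) \<le> 3" using h1(1) by simp
  moreover have "vec.dim (R ` {1,3,5,7}) \<le> 3" using h2(1) by simp
  ultimately show ?thesis by linarith
qed


lemma dotc_sum: "dotc (sum f A) x = (\<Sum>k\<in>A. dotc (f k) x)"
proof (cases "finite A")
  case True then show ?thesis by (induction rule: finite_induct) auto
next
  case False then show ?thesis by simp
qed

lemma dotc_sum2: "dotc r (\<Sum>k\<in>A. c k *s x k) = (\<Sum>k\<in>A. c k * dotc r (x k))"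
  by (simp add: dotc_comm[of r] dotc_sum)

lemma sum8: "(\<Sum>k<8::nat. f k) = f 0 + f 1 + f 2 + f 3 + f 4 + f 5 + f 6 + (f 7::'a::comm_monoid_add)"
  by (simp add: numeral_eq_Suc add.assoc)
lemma sum4: "(\<Sum>k<4::nat. f k) = f 0 + f 1 + f 2 + (f 3::'a::comm_monoid_add)"
  by (simp add: numeral_eq_Suc add.assoc)

lemma comb:
  fixes b g c :: "nat \<Rightarrow> complex"
  assumes bH: "b 0 + b 2 + b 4 + b 6 = 0" and bO: "b 1 + b 3 + b 5 + b 7 = 0"
    and g: "g 0 = \<alpha>" "g 2 = \<alpha>" "g 4 = \<alpha>" "g 6 = \<alpha>" "g 1 = \<beta>" "g 3 = \<beta>" "g 5 = \<beta>" "g 7 = \<beta>"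
    and j: "j < 8"
  shows "(\<Sum>k<8. b k * ((if j = k then 1 else 0) - g k * (if odd j \<noteq> odd k then 0 else c j))) = b j"
proof -
  have b6: "b 6 = - (b 0 + b 2 + b 4)" by (rule sym[OF minus_unique[OF bH]])
  have b7: "b 7 = - (b 1 + b 3 + b 5)" by (rule sym[OF minus_unique[OF bO]])
  have g1: "g (Suc 0) = \<beta>" using g by simp
  show ?thesis using j unfolding sum8 less8
    by (elim disjE) (simp_all add: g g1 b6 b7 algebra_simps)
qed

definition RR :: "(nat \<Rightarrow> real \<times> real \<Rightarrow> complex) \<Rightarrow> real \<times> real \<Rightarrow> nat \<Rightarrow> complex^6" where
  "RR mt w i = (\<chi> j. Mt_entry mt w i (ix j + 1))"

definition BB :: "(real \<times> real \<Rightarrow> complex) \<Rightarrow> (nat \<Rightarrow> real \<times> real \<Rightarrow> complex) \<Rightarrow> real \<times> real \<Rightarrow> nat \<Rightarrow> complex" where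
  "BB m0 mt w i = (if i = 0 then 1 else 0) - m0 w * Mt_entry mt w i 0"

lemma bit0_image: "{f (ix i) | i::'a::finite bit0. True} = f ` {0..<CARD('a bit0)}"
proof (rule set_eqI)
  fix x
  show "x \<in> {f (ix i) | i::'a bit0. True} \<longleftrightarrow> x \<in> f ` {0..<CARD('a bit0)}"
  proof
    assume "x \<in> {f (ix i) | i::'a bit0. True}"
    then obtain i :: "'a bit0" where "x = f (ix i)" by blast
    then show "x \<in> f ` {0..<CARD('a bit0)}" using ix_lt[of i] by auto
  next
    assume "x \<in> f ` {0..<CARD('a bit0)}"
    then obtain n where n: "n < CARD('a bit0)" "x = f n" by auto
    then have "x = f (ix (tob n :: 'a bit0))" using ix_tob[OF n(1)] by simp
    then show "x \<in> {f (ix i) | i::'a bit0. True}" by blast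
  qed
qed

lemma all_bit0: "(\<forall>k::'a::finite bit0. P (ix k)) \<longleftrightarrow> (\<forall>i<CARD('a bit0). P i)"
  by (metis ix_lt ix_tob)

lemma rows_Mhat: "rows (Mhat mt w) = RR mt w ` {0..<8}"
proof -
  have "rows (Mhat mt w) = {RR mt w (ix i) | i::8. True}"
    by (simp add: rows_def row_def Mhat_def RR_def)
  also have "\<dots> = RR mt w ` {0..<CARD(8)}" by (rule bit0_image)
  finally show ?thesis by simp
qed

lemma rows_Meven: "rows (Meven mt w) = RR mt w ` {0,2,4,6}"
proof -
  have "rows (Meven mt w) = {(\<lambda>n. RR mt w (2*n)) (ix i) | i::4. True}"
    by (simp add: rows_def row_def Meven_def RR_def)
  also have "\<dots> = (\<lambda>n. RR mt w (2*n)) ` {0..<CARD(4)}" by (rule bit0_image)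
  also have "\<dots> = RR mt w ` {0,2,4,6}" by (simp add: numeral_eq_Suc atLeastLessThanSuc insert_commute)
  finally show ?thesis .
qed

lemma rows_Modd: "rows (Modd mt w) = RR mt w ` {1,3,5,7}"
proof -
  have "rows (Modd mt w) = {(\<lambda>n. RR mt w (2*n+1)) (ix i) | i::4. True}"
    by (simp add: rows_def row_def Modd_def RR_def)
  also have "\<dots> = (\<lambda>n. RR mt w (2*n+1)) ` {0..<CARD(4)}" by (rule bit0_image)
  also have "\<dots> = RR mt w ` {1,3,5,7}" by (simp add: numeral_eq_Suc atLeastLessThanSuc insert_commute)
  finally show ?thesis .
qed

lemma solve_iff: "(Mhat mt w *v x = b0' m0 mt w) \<longleftrightarrow> (\<forall>i<8. dotc (RR mt w i) x = BB m0 mt w i)"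
proof -
  have "(Mhat mt w *v x = b0' m0 mt w) \<longleftrightarrow> (\<forall>k::8. dotc (RR mt w (ix k)) x = BB m0 mt w (ix k))"
    by (simp add: vec_eq_iff mv_dotc Mhat_def RR_def b0'_def BB_def)
  also have "\<dots> \<longleftrightarrow> (\<forall>i<8. dotc (RR mt w i) x = BB m0 mt w i)"
    using all_bit0[where 'a=4, of "\<lambda>i. dotc (RR mt w i) x = BB m0 mt w i"] by simp
  finally show ?thesis .
qed

lemma sum_ix: "sum (\<lambda>i. g (ix i)) (UNIV::'a::finite bit0 set) = (\<Sum>n<CARD('a bit0). g n)"
  by (simp add: sum_bit0 ix_tob)

lemma prod_even: "(\<chi> i. u (ix i)) v* Meven mt w = (\<Sum>n<4. u n *s RR mt w (2*n))"
proof -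
  have "((\<chi> i. u (ix i)) v* Meven mt w) $ j = (\<Sum>n<4. (u n *s RR mt w (2*n)) $ j)" for j
    unfolding vector_matrix_mult_def Meven_def RR_def
    using sum_ix[of "\<lambda>n. Mt_entry mt w (2*n) (ix j + 1) * u n", where 'a=2] by (simp add: mult.commute)
  then show ?thesis by (simp add: vec_eq_iff)
qed

lemma prod_odd: "(\<chi> i. u (ix i)) v* Modd mt w = (\<Sum>n<4. u n *s RR mt w (2*n+1))"
proof -
  have "((\<chi> i. u (ix i)) v* Modd mt w) $ j = (\<Sum>n<4. (u n *s RR mt w (2*n+1)) $ j)" for j
    unfolding vector_matrix_mult_def Modd_def RR_def
    using sum_ix[of "\<lambda>n. Mt_entry mt w (2*n+1) (ix j + 1) * u n", where 'a=2] by (simp add: mult.commute)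
  then show ?thesis by (simp add: vec_eq_iff)
qed

lemma per_trans:
  assumes "periodic2 f"
  shows "f ((fst w + 2*pi * of_int a, snd w + 2*pi * of_int b) + v) = f (w + v)"
proof -
  obtain x y where xy: "w + v = (x, y)" by fastforce
  have "(fst w + 2*pi * of_int a, snd w + 2*pi * of_int b) + v = (x + 2*pi * of_int a, y + 2*pi * of_int b)"
    using xy by (cases w, cases v) (simp add: algebra_simps)
  then show ?thesis using per_int[OF assms] xy by simp
qed

lemma shift0[simp]: "w + shift 0 = w"
  by (simp add: shift_def zero_prod_def[symmetric])

theorem proposition2:
  fixes m0 :: "real \<times> real \<Rightarrow> complex"
    and mt :: "nat \<Rightarrow> real \<times> real \<Rightarrow> complex"
  assumes per0: "periodic2 m0"
    and pert: "\<forall>j\<le>6. periodic2 (mt j)"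
    and fullrank: "\<forall>w\<in>S0. rank (Mhat mt w) = 6"
    and sum1: "\<forall>w\<in>S0. (\<Sum>i\<in>{0,2,4,6::nat}. m0 w * cnj (mt 0 (w + shift i))) = 1"
  shows "(\<forall>w\<in>S0. \<exists>x::complex^6. Mhat mt w *v x = b0' m0 mt w)
     \<longleftrightarrow> (\<forall>w\<in>S0. rank (Modd mt w) = 3 \<and> rank (Meven mt w) = 3
           \<and> (\<chi> i. m0 (w + shift (2 * ix i))) v* Meven mt w = 0
           \<and> (\<chi> i. m0 (w + shift (2 * ix i + 1))) v* Modd mt w = 0)"
proof -
  define tr where "tr w a b = (fst w + 2*pi * of_int a, snd w + 2*pi * of_int b)" for w :: "real \<times> real" and a b :: int
  have red: "\<exists>a b. tr w a b \<in> S0" for w unfolding tr_def by (rule red_S0)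
  have Mt_tr: "Mt_entry mt (tr w a b) i j = Mt_entry mt w i j" if "j \<le> 6" for w a b i j
    using per_trans[of "mt j"] pert that by (simp add: Mt_entry_def tr_def)
  have RR_tr: "RR mt (tr w a b) i = RR mt w i" for w a b i
  proof -
    have "ix (j::6) + 1 \<le> 6" for j using ix_lt[of j] by simp
    then show ?thesis by (simp add: RR_def vec_eq_iff Mt_tr)
  qed
  have m0_tr: "m0 (tr w a b) = m0 w" for w a b
    using per_trans[OF per0, of w a b 0] by (simp add: tr_def)
  have BB_tr: "BB m0 mt (tr w a b) i = BB m0 mt w i" for w a b i
    by (simp add: BB_def m0_tr Mt_tr)
  have dim6: "vec.dim (RR mt w ` {0..<8}) = 6" for w
  proof -
    obtain a b where "tr w a b \<in> S0" using red by blast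
    then have "rank (Mhat mt (tr w a b)) = 6" using fullrank by blast
    then show ?thesis by (simp add: row_rank_def_gen rows_Mhat RR_tr)
  qed
  have spanU: "vec.span (RR mt w ` {0..<8}) = UNIV" for w
    using dim6[of w] vec.dim_eq_full[of "RR mt w ` {0..<8}"] by (simp add: vec.dimension_def card_cart_basis)
  define X where "X w = (\<Sum>i\<in>{0,2,4,6::nat}. cnj (mt 0 (w + shift i)))" for w
  have sum1_all: "m0 w * X w = 1" for w
  proof -
    obtain a b where ab: "tr w a b \<in> S0" using red by blast
    have "(\<Sum>i\<in>{0,2,4,6::nat}. m0 (tr w a b) * cnj (mt 0 (tr w a b + shift i))) = 1" using sum1 ab by blast
    moreover have "mt 0 (tr w a b + shift i) = mt 0 (w + shift i)" for i
      using per_trans[of "mt 0" w a b "shift i"] pert by (simp add: tr_def)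
    ultimately show ?thesis by (simp add: X_def m0_tr distrib_left)
  qed
  have m0nz: "m0 w \<noteq> 0" for w using sum1_all[of w] by auto
  have per_mt0: "periodic2 (mt 0)" using pert by simp
  have X_exp: "X w = cnj (mt 0 w) + cnj (mt 0 (w + shift 2)) + cnj (mt 0 (w + shift 4)) + cnj (mt 0 (w + shift 6))" for w
    by (simp add: X_def add.assoc)
  have Xinv: "X (w + shift k) = X w" if "k \<in> {0,2,4,6}" for w k
  proof -
    have e: "mt 0 (w + shift k + shift i) = mt 0 (w + shift (sop k i))" if "i < 8" for i
      using per_shift[OF per_mt0, of k i w] that \<open>k \<in> {0,2,4,6}\<close> by auto
    have "X (w + shift k) = cnj (mt 0 (w + shift k + shift 0)) + cnj (mt 0 (w + shift k + shift 2)) + cnj (mt 0 (w + shift k + shift 4)) + cnj (mt 0 (w + shift k + shift 6))"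
      by (simp add: X_def add.assoc)
    also have "\<dots> = cnj (mt 0 (w + shift (sop k 0))) + cnj (mt 0 (w + shift (sop k 2))) + cnj (mt 0 (w + shift (sop k 4))) + cnj (mt 0 (w + shift (sop k 6)))"
      using e[of 0] e[of 2] e[of 4] e[of 6] by (simp del: shift0)
    also have "\<dots> = X w" using that unfolding X_exp
      by (auto simp: sop_def add_ac)
    finally show ?thesis .
  qed
  have m0inv: "m0 (w + shift k) = m0 w" if "k \<in> {0,2,4,6}" for w k
  proof -
    have "m0 (w + shift k) * X w = 1" using sum1_all[of "w + shift k"] Xinv[OF that] by simp
    moreover have "X w \<noteq> 0" using sum1_all[of w] by auto
    ultimately show ?thesis using sum1_all[of w] by (metis mult_right_cancel)
  qed
  have m0odd: "m0 (w + shift k) = m0 (w + shift 1)" if "k \<in> {1,3,5,7}" for w k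
  proof -
    have "\<exists>j\<in>{0,2,4,6}. sop 1 j = k" using that by (auto simp: sop_def)
    then obtain j where j: "j \<in> {0,2,4,6}" "sop 1 j = k" by blast
    have "m0 (w + shift 1 + shift j) = m0 (w + shift k)"
      using per_shift[OF per0, of 1 j w] j by auto
    then show ?thesis using m0inv[OF j(1), of "w + shift 1"] by simp
  qed
  have eqE: "(\<chi> i. m0 (w + shift (2 * ix i))) v* Meven mt w = m0 w *s (RR mt w 0 + RR mt w 2 + RR mt w 4 + RR mt w 6)" for w
    using prod_even[of "\<lambda>n. m0 (w + shift (2*n))" mt w]
    by (simp add: sum4 m0inv vector_add_ldistrib)
  have eqO: "(\<chi> i. m0 (w + shift (2 * ix i + 1))) v* Modd mt w = m0 (w + shift 1) *s (RR mt w 1 + RR mt w 3 + RR mt w 5 + RR mt w 7)" for w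
    using prod_odd[of "\<lambda>n. m0 (w + shift (2*n+1))" mt w] m0odd[of 3 w] m0odd[of 5 w] m0odd[of 7 w]
    by (simp add: sum4 vector_add_ldistrib)
  have TtoR: "rank (Modd mt w) = 3 \<and> rank (Meven mt w) = 3
           \<and> (\<chi> i. m0 (w + shift (2 * ix i))) v* Meven mt w = 0
           \<and> (\<chi> i. m0 (w + shift (2 * ix i + 1))) v* Modd mt w = 0"
    if TH: "RR mt w 0 + RR mt w 2 + RR mt w 4 + RR mt w 6 = 0" and TO: "RR mt w 1 + RR mt w 3 + RR mt w 5 + RR mt w 7 = 0" for w
  proof -
    have "rank (Meven mt w) = vec.dim (RR mt w ` {0,2,4,6})" by (simp only: row_rank_def_gen rows_Meven)
    moreover have "rank (Modd mt w) = vec.dim (RR mt w ` {1,3,5,7})" by (simp only: row_rank_def_gen rows_Modd)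
    moreover have "(\<chi> i. m0 (w + shift (2 * ix i))) v* Meven mt w = 0" unfolding eqE TH by simp
    moreover have "(\<chi> i. m0 (w + shift (2 * ix i + 1))) v* Modd mt w = 0" unfolding eqO TO by simp
    ultimately show ?thesis using rank_a[OF dim6 TH TO] by simp
  qed
  show ?thesis
  proof
    assume L: "\<forall>w\<in>S0. \<exists>x::complex^6. Mhat mt w *v x = b0' m0 mt w"
    have Lall: "\<exists>x. \<forall>i<8. dotc (RR mt w i) x = BB m0 mt w i" for w
    proof -
      obtain a b where ab: "tr w a b \<in> S0" using red by blast
      then obtain x where "Mhat mt (tr w a b) *v x = b0' m0 mt (tr w a b)" using L by blast
      then show ?thesis by (auto simp: solve_iff RR_tr BB_tr)
    qed
    show "\<forall>w\<in>S0. rank (Modd mt w) = 3 \<and> rank (Meven mt w) = 3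
           \<and> (\<chi> i. m0 (w + shift (2 * ix i))) v* Meven mt w = 0
           \<and> (\<chi> i. m0 (w + shift (2 * ix i + 1))) v* Modd mt w = 0"
    proof
      fix w :: "real \<times> real" assume "w \<in> S0"
      have RR_shift: "RR mt (w + shift k) i = RR mt w (sop k i)" if "k < 8" "i < 8" for k i
      proof -
        have "mt (ix j + 1) (w + shift k + shift i) = mt (ix j + 1) (w + shift (sop k i))" for j :: 6
          using per_shift[of "mt (ix j + 1)" k i w] that pert ix_lt[of j] by simp
        then show ?thesis by (simp add: RR_def vec_eq_iff Mt_entry_def)
      qed
      have BB_shift: "BB m0 mt (w + shift k) i = (if i = 0 then 1 else 0) - m0 (w + shift k) * (if odd i then 0 else cnj (mt 0 (w + shift (sop k i))))"
        if "k < 8" "i < 8" for k i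
        using per_shift[OF per_mt0 that, of w] by (simp add: BB_def Mt_entry_def)
      obtain xs where xs: "\<forall>i<8. dotc (RR mt (w + shift k) i) (xs k) = BB m0 mt (w + shift k) i" for k
      proof -
        have "\<forall>k. \<exists>x. \<forall>i<8. dotc (RR mt (w + shift k) i) x = BB m0 mt (w + shift k) i" using Lall by blast
        then have "\<exists>xs. \<forall>k. \<forall>i<8. dotc (RR mt (w + shift k) i) (xs k) = BB m0 mt (w + shift k) i" by (rule choice)
        then show ?thesis using that by blast
      qed
      define g where "g k = m0 (w + shift k)" for k
      define c where "c j = cnj (mt 0 (w + shift j))" for j
      have V: "dotc (RR mt w j) (xs k) = (if j = k then 1 else 0) - g k * (if odd j \<noteq> odd k then 0 else c j)"
        if "k < 8" "j < 8" for k j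
      proof -
        note sp = sinv_props[OF that]
        have "dotc (RR mt (w + shift k) (sinv k j)) (xs k) = BB m0 mt (w + shift k) (sinv k j)"
          using xs sp by blast
        moreover have "RR mt (w + shift k) (sinv k j) = RR mt w j"
          using RR_shift[OF that(1), of "sinv k j"] sp by simp
        moreover have "BB m0 mt (w + shift k) (sinv k j) = (if j = k then 1 else 0) - g k * (if odd j \<noteq> odd k then 0 else c j)"
        proof -
          have "BB m0 mt (w + shift k) (sinv k j) = (if sinv k j = 0 then 1 else 0) - g k * (if odd (sinv k j) then 0 else c j)"
            using BB_shift[OF that(1), of "sinv k j"] sp unfolding g_def c_def by simp
          then show ?thesis using sp by presburger
        qed
        ultimately show ?thesis by simp
      qed
      have gv: "g 0 = m0 w" "g 2 = m0 w" "g 4 = m0 w" "g 6 = m0 w"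
        "g 1 = m0 (w + shift 1)" "g 3 = m0 (w + shift 1)" "g 5 = m0 (w + shift 1)" "g 7 = m0 (w + shift 1)"
        unfolding g_def using m0inv[of 2 w] m0inv[of 4 w] m0inv[of 6 w] m0odd[of 3 w] m0odd[of 5 w] m0odd[of 7 w] by simp_all
      have T: "RR mt w 0 + RR mt w 2 + RR mt w 4 + RR mt w 6 = 0 \<and> RR mt w 1 + RR mt w 3 + RR mt w 5 + RR mt w 7 = 0"
      proof (rule solve_d)
        fix b :: "nat \<Rightarrow> complex"
        assume bH: "b 0 + b 2 + b 4 + b 6 = 0" and bO: "b 1 + b 3 + b 5 + b 7 = 0"
        define x where "x = (\<Sum>k<8. b k *s xs k)"
        have "dotc (RR mt w j) x = b j" if "j < 8" for j
        proof -
          have "dotc (RR mt w j) x = (\<Sum>k<8. b k * dotc (RR mt w j) (xs k))"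
            by (simp add: x_def dotc_sum2)
          also have "\<dots> = (\<Sum>k<8. b k * ((if j = k then 1 else 0) - g k * (if odd j \<noteq> odd k then 0 else c j)))"
            using V that by (intro sum.cong) auto
          also have "\<dots> = b j" by (rule comb[OF bH bO gv that])
          finally show ?thesis .
        qed
        then show "\<exists>x. \<forall>i<8. dotc (RR mt w i) x = b i" by blast
      qed
      then show "rank (Modd mt w) = 3 \<and> rank (Meven mt w) = 3
           \<and> (\<chi> i. m0 (w + shift (2 * ix i))) v* Meven mt w = 0
           \<and> (\<chi> i. m0 (w + shift (2 * ix i + 1))) v* Modd mt w = 0"
        using TtoR by blast
    qed
  next
    assume R: "\<forall>w\<in>S0. rank (Modd mt w) = 3 \<and> rank (Meven mt w) = 3
           \<and> (\<chi> i. m0 (w + shift (2 * ix i))) v* Meven mt w = 0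
           \<and> (\<chi> i. m0 (w + shift (2 * ix i + 1))) v* Modd mt w = 0"
    show "\<forall>w\<in>S0. \<exists>x::complex^6. Mhat mt w *v x = b0' m0 mt w"
    proof
      fix w :: "real \<times> real" assume "w \<in> S0"
      then have pe: "(\<chi> i. m0 (w + shift (2 * ix i))) v* Meven mt w = 0"
        and po: "(\<chi> i. m0 (w + shift (2 * ix i + 1))) v* Modd mt w = 0" using R by blast+
      have TH: "RR mt w 0 + RR mt w 2 + RR mt w 4 + RR mt w 6 = 0"
        using pe m0nz[of w] unfolding eqE vector_mul_eq_0 by blast
      have TO: "RR mt w 1 + RR mt w 3 + RR mt w 5 + RR mt w 7 = 0"
        using po m0nz[of "w + shift 1"] unfolding eqO vector_mul_eq_0 by blast
      have bH: "BB m0 mt w 0 + BB m0 mt w 2 + BB m0 mt w 4 + BB m0 mt w 6 = 0"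
      proof -
        have "BB m0 mt w 0 + BB m0 mt w 2 + BB m0 mt w 4 + BB m0 mt w 6 = 1 - m0 w * X w"
          unfolding X_exp BB_def Mt_entry_def by (simp add: ring_distribs)
        then show ?thesis using sum1_all[of w] by simp
      qed
      have bO: "BB m0 mt w 1 + BB m0 mt w 3 + BB m0 mt w 5 + BB m0 mt w 7 = 0"
        by (simp add: BB_def Mt_entry_def)
      obtain x where "\<forall>i<8. dotc (RR mt w i) x = BB m0 mt w i"
        using solve_c[OF spanU TH TO bH bO] by blast
      then show "\<exists>x::complex^6. Mhat mt w *v x = b0' m0 mt w" by (auto simp: solve_iff)
    qed
  qed
qed

end
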